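(* Let $a,b\ge 2$ and $c\ge 1$ be integers and set $d=ab-1$. Then $$\mathcal{G}_{(cd+a)}\subset \overline{\mathcal{G}_{(cd-1,\,b,\,a)}}.$$
   Context: $\mathcal{G}$ denotes the group of polynomial automorphisms of the complex affine plane $\mathbb{A}^2_{\mathbb{C}}=\mathrm{Spec}(\mathbb{C}[X,Y])$; an element is a pair $(f,g)\in\mathbb{C}[X,Y]^2$ with $\mathbb{C}[f,g]=\mathbb{C}[X,Y]$, and its degree is $\max\{\deg f,\deg g\}$. Affine automorphisms are those of degree $1$; triangular automorphisms are those of the form $(\alpha X+P(Y),\beta Y+\gamma)$ with $\alpha,\beta\in\mathbb{C}^*$, $\gamma\in\mathbb{C}$, $P\in\mathbb{C}[Y]$. By the Jung–van der Kulk theorem, $\mathcal{G}$ is the amalgamated free product of the affine and triangular subgroups along their intersection, so every non-affine automorphism has a reduced decomposition as an alternating product of affine and non-affine triangular automorphisms, and the sequence $(d_1,\dots,d_l)$ of degrees (all $\ge 2$) of the triangular factors is uniquely determined; it is called the polydegree. For a sequence $(d_1,\dots,d_l)$ of integers $\ge2$, $\mathcal{G}_{(d_1,\dots,d_l)}$ is the set of automorphisms with polydegree $(d_1,\dots,d_l)$; in particular $\mathcal{G}_{(n)}$ is the set of triangular automorphisms (composed with affine ones) of polydegree $(n)$. $\mathcal{G}$ carries the structure of an infinite-dimensional algebraic variety (in the sense of Shafarevich), and $\overline{\mathcal{H}}$ denotes the closure of a subset $\mathcal{H}\subset\mathcal{G}$ for the associated Zariski topology. *)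

theory Defs
  imports "HOL-Computational_Algebra.Polynomial"
begin

text \<open>Bivariate polynomials C[X,Y] represented as C[X][Y]:
  the outer variable is Y, the coefficients are polynomials in X.\<close>
type_synonym bpoly = "complex poly poly"

type_synonym aut = "bpoly \<times> bpoly"

definition const2 :: "complex \<Rightarrow> bpoly" where
  "const2 c = [:[:c:]:]"

definition varX :: bpoly where "varX = [:[:0, 1:]:]"
definition varY :: bpoly where "varY = [:0, 1:]"

definition bieval :: "bpoly \<Rightarrow> bpoly \<Rightarrow> bpoly \<Rightarrow> bpoly" where
  "bieval p f g = poly (map_poly (\<lambda>q. poly (map_poly const2 q) f) p) g"

definition tdeg :: "bpoly \<Rightarrow> nat" where
  "tdeg p = (if p = 0 then 0
     else Max ((\<lambda>i. degree (coeff p i) + i) ` {i. i \<le> degree p \<and> coeff p i \<noteq> 0}))"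

definition aut_deg :: "aut \<Rightarrow> nat" where
  "aut_deg \<phi> = max (tdeg (fst \<phi>)) (tdeg (snd \<phi>))"

definition is_aut :: "aut \<Rightarrow> bool" where
  "is_aut \<phi> \<longleftrightarrow> (\<exists>u v. bieval u (fst \<phi>) (snd \<phi>) = varX \<and> bieval v (fst \<phi>) (snd \<phi>) = varY)"

definition GG :: "aut set" where
  "GG = {\<phi>. is_aut \<phi>}"

definition comp_aut :: "aut \<Rightarrow> aut \<Rightarrow> aut" where
  "comp_aut \<phi> \<psi> = (bieval (fst \<phi>) (fst \<psi>) (snd \<psi>), bieval (snd \<phi>) (fst \<psi>) (snd \<psi>))"

definition id_aut :: aut where "id_aut = (varX, varY)"

definition comp_list :: "aut list \<Rightarrow> aut" where
  "comp_list xs = foldr comp_aut xs id_aut"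

text \<open>c + a X + b Y\<close>
definition lin :: "complex \<Rightarrow> complex \<Rightarrow> complex \<Rightarrow> bpoly" where
  "lin a b c = [:[:c, a:], [:b:]:]"

definition affine_aut :: "aut set" where
  "affine_aut = {(lin a1 b1 c1, lin a2 b2 c2) | a1 b1 c1 a2 b2 c2.
                    a1 * b2 - a2 * b1 \<noteq> 0}"

text \<open>Triangular automorphisms (alpha X + P(Y), beta Y + gamma).\<close>
definition triang_P :: "complex \<Rightarrow> complex poly \<Rightarrow> complex \<Rightarrow> complex \<Rightarrow> aut" where
  "triang_P \<alpha> P \<beta> \<gamma> = ([:[:0, \<alpha>:]:] + map_poly (\<lambda>c. [:c:]) P, lin 0 \<beta> \<gamma>)"

definition triangular_aut :: "aut set" where
  "triangular_aut = {triang_P \<alpha> P \<beta> \<gamma> | \<alpha> P \<beta> \<gamma>. \<alpha> \<noteq> 0 \<and> \<beta> \<noteq> 0}"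

definition triangular_deg :: "nat \<Rightarrow> aut set" where
  "triangular_deg n = {triang_P \<alpha> P \<beta> \<gamma> | \<alpha> P \<beta> \<gamma>. \<alpha> \<noteq> 0 \<and> \<beta> \<noteq> 0 \<and> degree P = n}"

fun interleave :: "'a list \<Rightarrow> 'a list \<Rightarrow> 'a list" where
  "interleave (a # as) (t # ts) = a # t # interleave as ts"
| "interleave as [] = as"
| "interleave [] ts = ts"

text \<open>G_(d_1,...,d_l): automorphisms admitting a reduced decomposition
  a_1 t_1 a_2 t_2 ... a_l t_l a_(l+1) with a_i affine, t_i triangular of degree d_i,
  and a_2,...,a_l not triangular.\<close>
definition Gpd :: "nat list \<Rightarrow> aut set" where
  "Gpd ds = {comp_list (interleave as ts) | as ts.
       length as = length ds + 1 \<and> length ts = length ds \<and>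
       (\<forall>i < length as. as ! i \<in> affine_aut) \<and>
       (\<forall>i < length ts. ts ! i \<in> triangular_deg (ds ! i)) \<and>
       (\<forall>i. 0 < i \<and> i < length ds \<longrightarrow> as ! i \<notin> triangular_aut)}"

text \<open>Coefficients: coords phi (k,i,j) = coefficient of X^i Y^j in the first (k=True)
  or second (k=False) component.\<close>
definition coords :: "aut \<Rightarrow> (bool \<times> nat \<times> nat) \<Rightarrow> complex" where
  "coords \<phi> = (\<lambda>(k, i, j). coeff (coeff (if k then fst \<phi> else snd \<phi>) j) i)"

inductive polyfun :: "(('i \<Rightarrow> complex) \<Rightarrow> complex) \<Rightarrow> bool" where
  pf_const: "polyfun (\<lambda>x. c)"
| pf_var: "polyfun (\<lambda>x. x i)"
| pf_add: "polyfun p \<Longrightarrow> polyfun q \<Longrightarrow> polyfun (\<lambda>x. p x + q x)"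
| pf_mult: "polyfun p \<Longrightarrow> polyfun q \<Longrightarrow> polyfun (\<lambda>x. p x * q x)"

definition G_le :: "nat \<Rightarrow> aut set" where
  "G_le n = {\<phi> \<in> GG. aut_deg \<phi> \<le> n}"

text \<open>Ind-Zariski topology: F is closed iff F \<inter> G_{\<le>n} is Zariski closed in G_{\<le>n} for all n.\<close>
definition zclosed :: "aut set \<Rightarrow> bool" where
  "zclosed F \<longleftrightarrow> F \<subseteq> GG \<and>
     (\<forall>n. \<exists>S. (\<forall>p\<in>S. polyfun p) \<and>
          F \<inter> G_le n = {\<phi> \<in> G_le n. \<forall>p\<in>S. p (coords \<phi>) = 0})"

definition zclosure :: "aut set \<Rightarrow> aut set" where
  "zclosure H = \<Inter> {F. zclosed F \<and> H \<subseteq> F}"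

end

theory Submission
  imports Defs "HOL-Computational_Algebra.Fundamental_Theorem_Algebra"
begin

lemma const2_0[simp]: "const2 0 = 0" by (simp add: const2_def)
lemma const2_1[simp]: "const2 1 = 1" by (simp add: const2_def one_pCons)
lemma const2_add: "const2 (a+b) = const2 a + const2 b" by (simp add: const2_def)
lemma const2_mult: "const2 (a*b) = const2 a * const2 b" by (simp add: const2_def)
lemma const2_diff: "const2 (a-b) = const2 a - const2 b" by (simp add: const2_def)
lemma const2_uminus: "const2 (-a) = - const2 a" by (simp add: const2_def)
lemma const2_power: "const2 (a^n) = const2 a ^ n"
  by (induction n) (simp_all add: const2_mult)
lemma const2_eq_iff[simp]: "const2 a = const2 b \<longleftrightarrow> a = b" by (simp add: const2_def)
lemma const2_eq_0_iff[simp]: "const2 a = 0 \<longleftrightarrow> a = 0" by (simp add: const2_def)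
lemma const2_sum: "const2 (sum f A) = (\<Sum>x\<in>A. const2 (f x))"
  by (induction A rule: infinite_finite_induct) (simp_all add: const2_add)
lemma coeff_const2_mult: "coeff (coeff (const2 c * p) j) i = c * coeff (coeff p j) i"
  by (simp add: const2_def)

lemma map_poly_add_hom:
  assumes "h 0 = 0" "\<And>x y. h (x + y) = h x + h y"
  shows "map_poly h (p + q) = map_poly h p + map_poly h q"
  by (intro poly_eqI) (simp add: coeff_map_poly assms)

lemma pmh_add:
  fixes h :: "'a::comm_ring_1 \<Rightarrow> 'b::comm_ring_1"
  assumes "h 0 = 0" "\<And>x y. h (x + y) = h x + h y"
  shows "poly (map_poly h (p + q)) z = poly (map_poly h p) z + poly (map_poly h q) z"
  by (simp add: map_poly_add_hom[OF assms])

lemma pmh_uminus: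
  fixes h :: "'a::comm_ring_1 \<Rightarrow> 'b::comm_ring_1"
  assumes "h 0 = 0" "\<And>x y. h (x + y) = h x + h y"
  shows "poly (map_poly h (- p)) z = - poly (map_poly h p) z"
proof -
  have "poly (map_poly h (p + - p)) z = 0" by simp
  then show ?thesis by (simp only: pmh_add[OF assms]) (simp add: add_eq_0_iff2)
qed

lemma pmh_diff:
  fixes h :: "'a::comm_ring_1 \<Rightarrow> 'b::comm_ring_1"
  assumes "h 0 = 0" "\<And>x y. h (x + y) = h x + h y"
  shows "poly (map_poly h (p - q)) z = poly (map_poly h p) z - poly (map_poly h q) z"
  using pmh_add[OF assms, of p "-q" z] pmh_uminus[OF assms, of q z] by simp

lemma pmh_smult:
  fixes h :: "'a::comm_ring_1 \<Rightarrow> 'b::comm_ring_1"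
  assumes "h 0 = 0" "\<And>x y. h (x * y) = h x * h y"
  shows "poly (map_poly h (smult c p)) z = h c * poly (map_poly h p) z"
  by (simp add: map_poly_smult[OF assms])

lemma pmh_mult:
  fixes h :: "'a::comm_ring_1 \<Rightarrow> 'b::comm_ring_1"
  assumes "h 0 = 0" "\<And>x y. h (x + y) = h x + h y" "\<And>x y. h (x * y) = h x * h y"
  shows "poly (map_poly h (p * q)) z = poly (map_poly h p) z * poly (map_poly h q) z"
proof (induction p)
  case 0 then show ?case by simp
next
  case (pCons a p)
  have "poly (map_poly h (pCons a p * q)) z = poly (map_poly h (smult a q + pCons 0 (p * q))) z"
    by simp
  also have "\<dots> = h a * poly (map_poly h q) z + z * (poly (map_poly h p) z * poly (map_poly h q) z)"
    by (simp add: pmh_add[OF assms(1,2)] pmh_smult[OF assms(1,3)] map_poly_pCons[of h, OF assms(1)] assms(1) pCons.IH)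
  also have "\<dots> = poly (map_poly h (pCons a p)) z * poly (map_poly h q) z"
    by (simp add: map_poly_pCons[of h, OF assms(1)] algebra_simps)
  finally show ?case .
qed

lemma pmh_const:
  fixes h :: "'a::comm_ring_1 \<Rightarrow> 'b::comm_ring_1"
  assumes "h 0 = 0"
  shows "poly (map_poly h [:c:]) z = h c"
  by (simp add: map_poly_pCons[of h, OF assms] assms)

lemma pmh_X:
  fixes h :: "'a::comm_ring_1 \<Rightarrow> 'b::comm_ring_1"
  assumes "h 0 = 0" "h 1 = 1"
  shows "poly (map_poly h [:0,1:]) z = z"
  by (simp add: map_poly_pCons[of h, OF assms(1)] assms)

lemma pmh_power:
  fixes h :: "'a::comm_ring_1 \<Rightarrow> 'b::comm_ring_1"
  assumes "h 0 = 0" "\<And>x y. h (x + y) = h x + h y" "\<And>x y. h (x * y) = h x * h y" "h 1 = 1"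
  shows "poly (map_poly h (p ^ n)) z = poly (map_poly h p) z ^ n"
proof (induction n)
  case 0 then show ?case by (simp add: one_pCons pmh_const assms)
next
  case (Suc n) then show ?case by (simp add: pmh_mult[OF assms(1-3)])
qed

lemma pmh_sum:
  fixes h :: "'a::comm_ring_1 \<Rightarrow> 'b::comm_ring_1"
  assumes "h 0 = 0" "\<And>x y. h (x + y) = h x + h y"
  shows "poly (map_poly h (sum f A)) z = (\<Sum>x\<in>A. poly (map_poly h (f x)) z)"
  by (induction A rule: infinite_finite_induct) (simp_all add: pmh_add[OF assms] assms)

lemma pmh_monom:
  fixes h :: "'a::comm_ring_1 \<Rightarrow> 'b::comm_ring_1"
  assumes "h 0 = 0"
  shows "poly (map_poly h (monom c n)) z = h c * z ^ n"
  by (simp add: map_poly_monom[of h, OF assms] poly_monom)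

definition ev :: "complex poly \<Rightarrow> bpoly \<Rightarrow> bpoly" where
  "ev u y = poly (map_poly const2 u) y"

lemmas c2h = const2_0 const2_add const2_mult const2_1

lemma ev_add: "ev (p + q) y = ev p y + ev q y" unfolding ev_def by (rule pmh_add) (simp_all add: c2h)
lemma ev_diff: "ev (p - q) y = ev p y - ev q y" unfolding ev_def by (rule pmh_diff) (simp_all add: c2h)
lemma ev_uminus: "ev (- p) y = - ev p y" unfolding ev_def by (rule pmh_uminus) (simp_all add: c2h)
lemma ev_mult: "ev (p * q) y = ev p y * ev q y" unfolding ev_def by (rule pmh_mult) (simp_all add: c2h)
lemma ev_smult: "ev (smult c p) y = const2 c * ev p y" unfolding ev_def by (rule pmh_smult) (simp_all add: c2h)
lemma ev_power: "ev (p ^ n) y = ev p y ^ n" unfolding ev_def by (rule pmh_power) (simp_all add: c2h)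
lemma ev_const: "ev [:c:] y = const2 c" unfolding ev_def by (rule pmh_const) (simp_all add: c2h)
lemma ev_0[simp]: "ev 0 y = 0" unfolding ev_def by simp
lemma ev_1[simp]: "ev 1 y = 1" unfolding ev_def by (simp add: one_pCons map_poly_pCons)
lemma ev_X: "ev [:0,1:] y = y" unfolding ev_def by (rule pmh_X) (simp_all add: c2h)
lemma ev_sum: "ev (sum f A) y = (\<Sum>x\<in>A. ev (f x) y)" unfolding ev_def by (rule pmh_sum) (simp_all add: c2h)
lemma ev_monom: "ev (monom c n) y = const2 c * y ^ n" unfolding ev_def by (rule pmh_monom) (simp_all add: c2h)
lemma ev_pCons: "ev (pCons a p) y = const2 a + y * ev p y"
  unfolding ev_def by (simp add: map_poly_pCons)

lemma ev_hom0: "ev 0 f = 0" by simp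
lemma ev_hom_add: "ev (x + y) f = ev x f + ev y f" by (rule ev_add)
lemma ev_hom_mult: "ev (x * y) f = ev x f * ev y f" by (rule ev_mult)

lemma bieval_alt: "bieval p f g = poly (map_poly (\<lambda>q. ev q f) p) g"
  unfolding bieval_def ev_def by simp

lemma bieval_add: "bieval (p + q) f g = bieval p f g + bieval q f g"
  unfolding bieval_alt by (rule pmh_add) (simp_all add: ev_add)
lemma bieval_diff: "bieval (p - q) f g = bieval p f g - bieval q f g"
  unfolding bieval_alt by (rule pmh_diff) (simp_all add: ev_add)
lemma bieval_uminus: "bieval (- p) f g = - bieval p f g"
  unfolding bieval_alt by (rule pmh_uminus) (simp_all add: ev_add)
lemma bieval_mult: "bieval (p * q) f g = bieval p f g * bieval q f g"
  unfolding bieval_alt by (rule pmh_mult) (simp_all add: ev_add ev_mult)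
lemma bieval_power: "bieval (p ^ n) f g = bieval p f g ^ n"
  unfolding bieval_alt by (rule pmh_power) (simp_all add: ev_add ev_mult)
lemma bieval_sum: "bieval (sum h A) f g = (\<Sum>x\<in>A. bieval (h x) f g)"
  unfolding bieval_alt by (rule pmh_sum) (simp_all add: ev_add)
lemma bieval_0[simp]: "bieval 0 f g = 0" by (simp add: bieval_def)
lemma bieval_const2[simp]: "bieval (const2 c) f g = const2 c"
  unfolding bieval_alt by (simp add: const2_def map_poly_pCons ev_const)
lemma bieval_varX[simp]: "bieval varX f g = f"
  unfolding bieval_alt varX_def by (simp add: pmh_const ev_X)
lemma bieval_varY[simp]: "bieval varY f g = g"
  unfolding bieval_alt varY_def by (simp add: map_poly_pCons)

lemma bieval_pCons: "bieval (pCons q p) f g = ev q f + g * bieval p f g"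
  unfolding bieval_alt by (simp add: map_poly_pCons)

lemma bieval_ev: "bieval (ev u w) f g = ev u (bieval w f g)"
proof (induction u)
  case 0 then show ?case by simp
next
  case (pCons a u) then show ?case by (simp add: ev_pCons bieval_add bieval_mult)
qed

lemma bieval_ev_inner: "bieval [:q:] f g = ev q f"
  by (simp add: bieval_pCons)

lemma ev_inner_bieval: "bieval (ev q varX) f g = ev q f"
  by (simp add: bieval_ev)

lemma poly_pCons_X: "poly (map_poly (\<lambda>c. [:c:]) q) [:0,1:] = (q :: 'a::comm_ring_1 poly)"
  by (induction q) (simp_all add: map_poly_pCons)

lemma ev_varX: "ev q varX = [:q:]"
proof (induction q)
  case 0 then show ?case by simp
next
  case (pCons a q) then show ?case
    by (simp add: ev_pCons varX_def const2_def)
qed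

lemma bieval_XY: "bieval p varX varY = p"
proof (induction p)
  case 0 then show ?case by simp
next
  case (pCons a p) then show ?case
    by (simp add: bieval_pCons ev_varX varY_def)
qed

lemma bieval_assoc: "bieval (bieval p f g) u v = bieval p (bieval f u v) (bieval g u v)"
proof (induction p)
  case 0 then show ?case by (simp add: bieval_def)
next
  case (pCons a p)
  have "bieval (ev a f) u v = ev a (bieval f u v)" by (rule bieval_ev)
  then show ?case by (simp add: bieval_pCons bieval_add bieval_mult pCons.IH)
qed

lemma lin_eq: "lin a b c = const2 c + const2 a * varX + const2 b * varY"
  by (simp add: lin_def const2_def varX_def varY_def)

lemma varX_lin: "varX = lin 1 0 0" by (simp add: lin_def varX_def)
lemma varY_lin: "varY = lin 0 1 0" by (simp add: lin_def varY_def)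

lemma bieval_lin: "bieval (lin a b c) f g = const2 c + const2 a * f + const2 b * g"
  by (simp add: lin_eq bieval_add bieval_mult)

lemma map_const_ev: "map_poly (\<lambda>c. [:c:]) P = ev P varY"
proof -
  have "map_poly const2 P = map_poly (\<lambda>q. [:q:]) (map_poly (\<lambda>c. [:c:]) P)"
  proof -
    have "const2 = (\<lambda>x. [:[:x:]:])" by (auto simp: const2_def)
    then show ?thesis by (simp add: map_poly_map_poly o_def)
  qed
  then show ?thesis unfolding ev_def varY_def by (simp add: poly_pCons_X)
qed

lemma triang_fst: "fst (triang_P \<alpha> P \<beta> \<gamma>) = const2 \<alpha> * varX + ev P varY"
  by (simp add: triang_P_def map_const_ev const2_def varX_def)

lemma triang_snd: "snd (triang_P \<alpha> P \<beta> \<gamma>) = lin 0 \<beta> \<gamma>"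
  by (simp add: triang_P_def)

lemma lin_comp: "bieval (lin a b c) (lin a1 b1 c1) (lin a2 b2 c2) = lin (a*a1 + b*a2) (a*b1+b*b2) (c + a*c1 + b*c2)"
  by (simp only: bieval_lin) (simp add: lin_eq const2_add const2_mult algebra_simps)

lemma comp_aut_lin: "comp_aut (lin a1 b1 c1, lin a2 b2 c2) (f, g) =
   (const2 c1 + const2 a1 * f + const2 b1 * g, const2 c2 + const2 a2 * f + const2 b2 * g)"
  by (simp add: comp_aut_def bieval_lin)

lemma comp_aut_triang: "comp_aut (triang_P \<alpha> P \<beta> \<gamma>) (f, g) =
   (const2 \<alpha> * f + ev P g, const2 \<gamma> + const2 \<beta> * g)"
  unfolding comp_aut_def by (simp add: triang_fst triang_snd bieval_add bieval_mult bieval_ev bieval_lin)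

lemma comp_aut_id: "comp_aut \<phi> id_aut = \<phi>"
  by (simp add: comp_aut_def id_aut_def bieval_XY)

lemma is_aut_comp:
  assumes "is_aut \<phi>" "is_aut \<psi>" shows "is_aut (comp_aut \<phi> \<psi>)"
proof -
  obtain u1 v1 where 1: "bieval u1 (fst \<phi>) (snd \<phi>) = varX" "bieval v1 (fst \<phi>) (snd \<phi>) = varY"
    using assms(1) unfolding is_aut_def by blast
  obtain u2 v2 where 2: "bieval u2 (fst \<psi>) (snd \<psi>) = varX" "bieval v2 (fst \<psi>) (snd \<psi>) = varY"
    using assms(2) unfolding is_aut_def by blast
  let ?f = "fst (comp_aut \<phi> \<psi>)" and ?g = "snd (comp_aut \<phi> \<psi>)"
  have A: "bieval u1 ?f ?g = fst \<psi>" "bieval v1 ?f ?g = snd \<psi>"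
    using 1 by (simp_all add: comp_aut_def bieval_assoc[symmetric])
  have "bieval (bieval u2 u1 v1) ?f ?g = varX" "bieval (bieval v2 u1 v1) ?f ?g = varY"
    by (simp_all add: bieval_assoc A 2)
  then show ?thesis unfolding is_aut_def by blast
qed

lemma is_aut_affine:
  assumes "a1 * b2 - a2 * b1 \<noteq> 0"
  shows "is_aut (lin a1 b1 c1, lin a2 b2 c2)"
proof -
  define D where "D = a1 * b2 - a2 * b1"
  have D: "D \<noteq> 0" using assms D_def by simp
  let ?u = "lin (b2/D) (-b1/D) ((b1*c2 - b2*c1)/D)"
  let ?v = "lin (-a2/D) (a1/D) ((a2*c1 - a1*c2)/D)"
  have "bieval ?u (lin a1 b1 c1) (lin a2 b2 c2) = lin ((b2/D)*a1 + (-b1/D)*a2) ((b2/D)*b1 + (-b1/D)*b2)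
       ((b1*c2 - b2*c1)/D + (b2/D)*c1 + (-b1/D)*c2)"
    by (rule lin_comp)
  also have "\<dots> = lin 1 0 0"
  proof (intro arg_cong3[where f=lin])
    have "(b2/D)*a1 + (-b1/D)*a2 = (a1*b2 - a2*b1)/D" using D by (simp add: field_simps)
    then show "(b2/D)*a1 + (-b1/D)*a2 = 1" using D by (simp add: D_def)
    show "(b2/D)*b1 + (-b1/D)*b2 = 0" by (simp add: field_simps)
    show "(b1*c2 - b2*c1)/D + (b2/D)*c1 + (-b1/D)*c2 = 0" using D by (simp add: field_simps)
  qed
  finally have 1: "bieval ?u (lin a1 b1 c1) (lin a2 b2 c2) = varX" by (simp add: varX_lin)
  have "bieval ?v (lin a1 b1 c1) (lin a2 b2 c2) = lin ((-a2/D)*a1 + (a1/D)*a2) ((-a2/D)*b1 + (a1/D)*b2)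
       ((a2*c1 - a1*c2)/D + (-a2/D)*c1 + (a1/D)*c2)"
    by (rule lin_comp)
  also have "\<dots> = lin 0 1 0"
  proof (intro arg_cong3[where f=lin])
    show "(-a2/D)*a1 + (a1/D)*a2 = 0" by (simp add: field_simps)
    have "(-a2/D)*b1 + (a1/D)*b2 = (a1*b2 - a2*b1)/D" using D by (simp add: field_simps)
    then show "(-a2/D)*b1 + (a1/D)*b2 = 1" using D by (simp add: D_def)
    show "(a2*c1 - a1*c2)/D + (-a2/D)*c1 + (a1/D)*c2 = 0" using D by (simp add: field_simps)
  qed
  finally have 2: "bieval ?v (lin a1 b1 c1) (lin a2 b2 c2) = varY" by (simp add: varY_lin)
  show ?thesis unfolding is_aut_def using 1 2 by auto
qed

lemma is_aut_triang:
  assumes "\<alpha> \<noteq> 0" "\<beta> \<noteq> 0"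
  shows "is_aut (triang_P \<alpha> P \<beta> \<gamma>)"
proof -
  let ?f = "fst (triang_P \<alpha> P \<beta> \<gamma>)" and ?g = "snd (triang_P \<alpha> P \<beta> \<gamma>)"
  let ?v = "lin 0 (1/\<beta>) (-\<gamma>/\<beta>)"
  let ?u = "const2 (1/\<alpha>) * (varX - ev P ?v)"
  have g: "?g = const2 \<gamma> + const2 \<beta> * varY" by (simp add: triang_P_def lin_eq)
  have 1: "bieval ?v ?f ?g = varY"
    using assms unfolding bieval_lin g
    by (simp add: algebra_simps const2_mult[symmetric] const2_add[symmetric])
  have "bieval ?u ?f ?g = const2 (1/\<alpha>) * (?f - ev P varY)"
    by (simp only: bieval_mult bieval_diff bieval_ev 1 bieval_const2 bieval_varX)
  also have "\<dots> = varX" using assms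
    by (simp add: triang_fst mult.assoc[symmetric] const2_mult[symmetric])
  finally show ?thesis unfolding is_aut_def using 1 by blast
qed

lemma affine_is_aut: "A \<in> affine_aut \<Longrightarrow> is_aut A"
  unfolding affine_aut_def using is_aut_affine by auto

lemma triangular_deg_is_aut: "t \<in> triangular_deg n \<Longrightarrow> is_aut t"
  unfolding triangular_deg_def using is_aut_triang by auto

lemma tdeg_le:
  assumes "\<And>i j. coeff (coeff p j) i \<noteq> 0 \<Longrightarrow> i + j \<le> N"
  shows "tdeg p \<le> N"
proof (cases "p = 0")
  case True then show ?thesis by (simp add: tdeg_def)
next
  case False
  let ?S = "{i. i \<le> degree p \<and> coeff p i \<noteq> 0}"
  have fin: "finite ?S" by simp
  have ne: "?S \<noteq> {}" using False by (auto intro!: exI[of _ "degree p"])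
  have "\<forall>x\<in>(\<lambda>i. degree (coeff p i) + i) ` ?S. x \<le> N"
  proof
    fix x assume "x \<in> (\<lambda>i. degree (coeff p i) + i) ` ?S"
    then obtain i where i: "coeff p i \<noteq> 0" "x = degree (coeff p i) + i" by auto
    have "coeff (coeff p i) (degree (coeff p i)) \<noteq> 0" using i by simp
    then show "x \<le> N" using assms i by auto
  qed
  then show ?thesis using False fin ne by (simp add: tdeg_def)
qed

lemma tdeg_ge:
  assumes "coeff (coeff p j) i \<noteq> 0"
  shows "i + j \<le> tdeg p"
proof -
  have p: "p \<noteq> 0" using assms by auto
  have cj: "coeff p j \<noteq> 0" using assms by auto
  then have j: "j \<le> degree p" by (meson le_degree)
  have "i \<le> degree (coeff p j)" using assms by (meson le_degree)
  moreover have "degree (coeff p j) + j \<le> Max ((\<lambda>i. degree (coeff p i) + i) ` {i. i \<le> degree p \<and> coeff p i \<noteq> 0})"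
    using j cj by (intro Max_ge) auto
  ultimately show ?thesis using p by (simp add: tdeg_def)
qed

section \<open>families polynomial in a parameter\<close>

lemma coeff_poly_const2:
  "coeff (coeff (poly Q (const2 e)) j) i = poly (map_poly (\<lambda>z. coeff (coeff z j) i) Q) e"
proof (induction Q)
  case 0 then show ?case by simp
next
  case (pCons a Q)
  then show ?case by (simp add: map_poly_pCons coeff_const2_mult)
qed

lemma tdeg_poly_const2:
  "tdeg (poly Q (const2 e)) \<le> (\<Sum>m\<le>degree Q. tdeg (coeff Q m))"
proof (rule tdeg_le)
  fix i j assume nz: "coeff (coeff (poly Q (const2 e)) j) i \<noteq> 0"
  have "poly Q (const2 e) = (\<Sum>m\<le>degree Q. coeff Q m * const2 e ^ m)"
    by (simp add: poly_altdef)
  then have "coeff (coeff (poly Q (const2 e)) j) i = (\<Sum>m\<le>degree Q. e ^ m * coeff (coeff (coeff Q m) j) i)"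
    by (simp add: coeff_sum mult.commute[of "coeff Q _"] const2_power[symmetric] coeff_const2_mult)
  with nz obtain m where m: "m \<le> degree Q" "coeff (coeff (coeff Q m) j) i \<noteq> 0"
  proof -
    assume h: "\<And>m. m \<le> degree Q \<Longrightarrow> coeff (coeff (coeff Q m) j) i \<noteq> 0 \<Longrightarrow> thesis"
    from nz \<open>coeff (coeff (poly Q (const2 e)) j) i = _\<close>
    have "(\<Sum>m\<le>degree Q. e ^ m * coeff (coeff (coeff Q m) j) i) \<noteq> 0" by simp
    then obtain m where "m \<in> {..degree Q}" "e ^ m * coeff (coeff (coeff Q m) j) i \<noteq> 0"
      using sum.not_neutral_contains_not_neutral by blast
    then show thesis using h by auto
  qed
  have "i + j \<le> tdeg (coeff Q m)" by (rule tdeg_ge[OF m(2)])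
  also have "\<dots> \<le> (\<Sum>m\<le>degree Q. tdeg (coeff Q m))"
    using m(1) by (intro member_le_sum) auto
  finally show "i + j \<le> (\<Sum>m\<le>degree Q. tdeg (coeff Q m))" .
qed

definition pfun :: "(complex \<Rightarrow> complex) \<Rightarrow> bool" where
  "pfun f \<longleftrightarrow> (\<exists>r. \<forall>x. f x = poly r x)"

lemma polyfun_pfun:
  assumes "polyfun p" "\<And>idx. pfun (\<lambda>e. X e idx)"
  shows "pfun (\<lambda>e. p (X e))"
  using assms(1)
proof induction
  case (pf_const c) then show ?case unfolding pfun_def by (intro exI[of _ "[:c:]"]) simp
next
  case (pf_var i) then show ?case using assms(2) by simp
next
  case (pf_add p q)
  then obtain r1 r2 where "\<forall>x. p (X x) = poly r1 x" "\<forall>x. q (X x) = poly r2 x" unfolding pfun_def by blast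
  then show ?case unfolding pfun_def by (intro exI[of _ "r1 + r2"]) simp
next
  case (pf_mult p q)
  then obtain r1 r2 where "\<forall>x. p (X x) = poly r1 x" "\<forall>x. q (X x) = poly r2 x" unfolding pfun_def by blast
  then show ?case unfolding pfun_def by (intro exI[of _ "r1 * r2"]) simp
qed

lemma closure_lemma:
  fixes Q1 Q2 :: "bpoly poly"
  assumes E: "infinite E" and H: "\<And>e. e \<in> E \<Longrightarrow> (poly Q1 (const2 e), poly Q2 (const2 e)) \<in> H"
    and G: "(coeff Q1 0, coeff Q2 0) \<in> GG"
  shows "(coeff Q1 0, coeff Q2 0) \<in> zclosure H"
proof -
  define \<phi> where "\<phi> e = (poly Q1 (const2 e), poly Q2 (const2 e))" for e
  have phi0: "\<phi> 0 = (coeff Q1 0, coeff Q2 0)" by (simp add: \<phi>_def poly_0_coeff_0)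
  define N where "N = (\<Sum>m\<le>degree Q1. tdeg (coeff Q1 m)) + (\<Sum>m\<le>degree Q2. tdeg (coeff Q2 m))"
  have degN: "aut_deg (\<phi> e) \<le> N" for e
    unfolding aut_deg_def \<phi>_def N_def using tdeg_poly_const2[of Q1 e] tdeg_poly_const2[of Q2 e] by simp
  have pf: "pfun (\<lambda>e. coords (\<phi> e) idx)" for idx
  proof -
    obtain k i j where idx: "idx = (k, i, j)" by (cases idx) auto
    show ?thesis unfolding pfun_def idx coords_def \<phi>_def
      by (intro exI[of _ "map_poly (\<lambda>z. coeff (coeff z j) i) (if k then Q1 else Q2)"])
         (simp add: coeff_poly_const2)
  qed
  show ?thesis unfolding zclosure_def
  proof (intro InterI, clarify)
    fix F assume F: "zclosed F" "H \<subseteq> F"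
    then obtain S where S: "\<forall>p\<in>S. polyfun p" "F \<inter> G_le N = {\<phi> \<in> G_le N. \<forall>p\<in>S. p (coords \<phi>) = 0}"
      unfolding zclosed_def by blast
    have FG: "F \<subseteq> GG" using F unfolding zclosed_def by simp
    have "\<forall>p\<in>S. p (coords (\<phi> 0)) = 0"
    proof
      fix p assume p: "p \<in> S"
      obtain r where r: "\<And>x. p (coords (\<phi> x)) = poly r x"
        using polyfun_pfun[where X="\<lambda>e. coords (\<phi> e)", OF S(1)[rule_format, OF p] pf] unfolding pfun_def by blast
      have "\<phi> e \<in> F \<inter> G_le N" if "e \<in> E" for e
        using H[OF that] F(2) FG degN[of e] unfolding G_le_def \<phi>_def by auto
      then have "poly r e = 0" if "e \<in> E" for e
      proof -
        have "\<phi> e \<in> F \<inter> G_le N" using that \<open>\<And>e. e \<in> E \<Longrightarrow> \<phi> e \<in> F \<inter> G_le N\<close> by blast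
        then have "p (coords (\<phi> e)) = 0" using S(2) p by blast
        then show ?thesis using r by simp
      qed
      then have "E \<subseteq> {x. poly r x = 0}" by auto
      then have "r = 0" using E poly_roots_finite[of r] finite_subset by auto
      then show "p (coords (\<phi> 0)) = 0" using r by simp
    qed
    moreover have "\<phi> 0 \<in> G_le N" using G degN[of 0] phi0 unfolding G_le_def by simp
    ultimately have "\<phi> 0 \<in> F \<inter> G_le N" using S(2) by blast
    then show "(coeff Q1 0, coeff Q2 0) \<in> F" using phi0 by simp
  qed
qed

lemma Gpd1_elem:
  assumes "\<psi> \<in> Gpd [n]"
  obtains A0 A1 \<alpha> P \<beta> \<gamma> where "A0 \<in> affine_aut" "A1 \<in> affine_aut" "\<alpha> \<noteq> 0" "\<beta> \<noteq> 0" "degree P = n"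
    "\<psi> = comp_aut A0 (comp_aut (triang_P \<alpha> P \<beta> \<gamma>) A1)"
proof -
  obtain as ts where h: "\<psi> = comp_list (interleave as ts)" "length as = 2" "length ts = 1"
    "\<forall>i<length as. as ! i \<in> affine_aut" "\<forall>i<length ts. ts ! i \<in> triangular_deg ([n] ! i)"
    using assms unfolding Gpd_def by auto
  obtain A0 A1 where as: "as = [A0, A1]" using h(2)
    by (metis (no_types, opaque_lifting) One_nat_def Suc_length_conv length_0_conv numeral_2_eq_2)
  obtain t where ts: "ts = [t]" using h(3) by (metis One_nat_def length_0_conv length_Suc_conv)
  have A: "A0 \<in> affine_aut" "A1 \<in> affine_aut" using h(4) as by auto
  have "t \<in> triangular_deg n" using h(5) ts by auto
  then obtain \<alpha> P \<beta> \<gamma> where t: "t = triang_P \<alpha> P \<beta> \<gamma>" "\<alpha> \<noteq> 0" "\<beta> \<noteq> 0" "degree P = n"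
    unfolding triangular_deg_def by auto
  have "\<psi> = comp_aut A0 (comp_aut (triang_P \<alpha> P \<beta> \<gamma>) A1)"
    using h(1) as ts t by (simp add: comp_list_def comp_aut_id)
  then show ?thesis using that A t by blast
qed

lemma Gpd1_GG: assumes "\<psi> \<in> Gpd [n]" shows "\<psi> \<in> GG"
proof -
  obtain A0 A1 \<alpha> P \<beta> \<gamma> where h: "A0 \<in> affine_aut" "A1 \<in> affine_aut" "\<alpha> \<noteq> 0" "\<beta> \<noteq> 0"
    "\<psi> = comp_aut A0 (comp_aut (triang_P \<alpha> P \<beta> \<gamma>) A1)"
    using Gpd1_elem[OF assms] by metis
  show ?thesis unfolding GG_def h(5)
    by (simp add: is_aut_comp affine_is_aut h is_aut_triang)
qed

section \<open>Taylor coefficients\<close>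

definition tay :: "nat \<Rightarrow> complex poly \<Rightarrow> complex poly" where
  "tay m u = smult (1 / fact m) ((pderiv ^^ m) u)"

lemma pderiv_X_mult: "pderiv (pCons 0 u) = pCons 0 (pderiv u) + u"
  by (simp add: pderiv_pCons add.commute)

lemma higher_pderiv_X_mult:
  "(pderiv ^^ Suc m) (pCons 0 u) = pCons 0 ((pderiv ^^ Suc m) u) + smult (of_nat (Suc m)) ((pderiv ^^ m) u)"
proof (induction m)
  case 0 then show ?case by (simp add: pderiv_X_mult)
next
  case (Suc m)
  have "(pderiv ^^ Suc (Suc m)) (pCons 0 u) = pderiv ((pderiv ^^ Suc m) (pCons 0 u))" by simp
  also have "\<dots> = pCons 0 ((pderiv ^^ Suc (Suc m)) u) + smult (of_nat (Suc (Suc m))) ((pderiv ^^ Suc m) u)"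
    unfolding Suc by (simp add: pderiv_add pderiv_X_mult pderiv_smult algebra_simps smult_add_left)
  finally show ?case .
qed

lemma tay_pCons_Suc:
  "tay (Suc m) (pCons a u) = [:0,1:] * tay (Suc m) u + tay m u"
proof -
  have pc: "pCons a u = [:a:] + pCons 0 u" by simp
  have c0: "(pderiv ^^ Suc m) [:a:] = 0"
    by (induction m) (simp_all add: pderiv_pCons)
  have nz: "(of_nat (Suc m) :: complex) \<noteq> 0" by (simp del: of_nat_Suc)
  then have e: "of_nat (Suc m) / fact (Suc m) = (1 / fact m :: complex)"
    by (metis fact_Suc nonzero_divide_mult_cancel_left)
  show ?thesis unfolding tay_def pc higher_pderiv_add c0 higher_pderiv_X_mult
    using nz by (simp add: smult_add_right e del: of_nat_Suc)
qed

lemma tay_0: "tay 0 u = u" by (simp add: tay_def)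

section \<open>The univariate identity\<close>

lemma const_pow: "[:c:] ^ m = [:c ^ m:]"
  by (induction m) (simp_all add: one_pCons mult.commute)

definition UU :: "complex poly \<Rightarrow> complex poly \<Rightarrow> nat \<Rightarrow> complex poly" where
  "UU V W k = (if k = 0 then V else smult ((-1)^k / fact k) ((pderiv ^^ (k - 1)) (W ^ k * pderiv V)))"

lemma tay_UU:
  assumes "k \<le> n" "1 \<le> n"
  shows "tay (n - k) (UU V W k) = smult ((-1)^k / (fact k * fact (n - k))) ((pderiv ^^ (n - 1)) (W ^ k * pderiv V))"
proof (cases "k = 0")
  case True
  have "(pderiv ^^ n) V = (pderiv ^^ (n - 1)) (pderiv V)"
    using assms by (metis Suc_diff_1 comp_apply funpow_Suc_right less_le_trans zero_less_one)
  then show ?thesis using True by (simp add: UU_def tay_def)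
next
  case False
  have "(pderiv ^^ (n - k)) ((pderiv ^^ (k - 1)) g) = (pderiv ^^ (n - 1)) g" for g :: "complex poly"
  proof -
    have "n - 1 = (n - k) + (k - 1)" using assms False by simp
    then show ?thesis by (simp add: funpow_add)
  qed
  then show ?thesis using False by (simp add: UU_def tay_def higher_pderiv_smult ac_simps)
qed

lemma dvd_pderiv_power:
  fixes q :: "complex poly"
  assumes "pderiv q = 1" "q ^ Suc m dvd p"
  shows "q ^ m dvd pderiv p"
proof -
  obtain r where r: "p = q ^ Suc m * r" using assms(2) by blast
  have "pderiv p = q ^ m * (q * pderiv r + smult (of_nat (Suc m)) r)"
    unfolding r pderiv_mult pderiv_power_Suc assms(1) by (simp add: algebra_simps)
  then show ?thesis by simp
qed

lemma dvd_higher_pderiv: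
  fixes p :: "complex poly"
  assumes "[:-y0,1:] ^ Suc j dvd p"
  shows "[:-y0,1:] dvd (pderiv ^^ j) p"
  using assms
proof (induction j arbitrary: p)
  case 0 then show ?case by simp
next
  case (Suc j)
  have "[:-y0,1:] ^ Suc j dvd pderiv p"
    by (rule dvd_pderiv_power[OF _ Suc.prems]) (simp add: pderiv_pCons)
  then have "[:-y0,1:] dvd (pderiv ^^ j) (pderiv p)" by (rule Suc.IH)
  then show ?case by (simp only: funpow_Suc_right o_apply)
qed

lemma UU_identity:
  assumes "1 \<le> n"
  shows "(\<Sum>k\<le>n. tay (n - k) (UU V W k) * W ^ (n - k)) = 0"
proof -
  have "poly (\<Sum>k\<le>n. tay (n - k) (UU V W k) * W ^ (n - k)) y0 = 0" for y0
  proof -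
    define w0 where "w0 = poly W y0"
    define G where "G = ([:w0:] - W) ^ n * pderiv V"
    have "[:-y0,1:] dvd [:w0:] - W" by (simp add: poly_eq_0_iff_dvd[symmetric] w0_def)
    then have "[:-y0,1:] ^ n dvd ([:w0:] - W) ^ n" by (rule dvd_power_same)
    then have "[:-y0,1:] ^ Suc (n - 1) dvd G" unfolding G_def using assms by simp
    then have "[:-y0,1:] dvd (pderiv ^^ (n - 1)) G" by (rule dvd_higher_pderiv)
    then have zero: "poly ((pderiv ^^ (n - 1)) G) y0 = 0" by (simp add: poly_eq_0_iff_dvd)
    have "G = (\<Sum>k\<le>n. smult (of_nat (n choose k) * (-1)^k * w0 ^ (n - k)) (W ^ k * pderiv V))"
    proof -
      have "([:w0:] - W) ^ n = (- W + [:w0:]) ^ n" by simp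
      also have "\<dots> = (\<Sum>k\<le>n. of_nat (n choose k) * (- W) ^ k * [:w0:] ^ (n - k))"
        by (rule binomial_ring)
      also have "\<dots> = (\<Sum>k\<le>n. smult (of_nat (n choose k) * (-1)^k * w0 ^ (n - k)) (W ^ k))"
      proof (intro sum.cong refl)
        fix k
        have 1: "(- W) ^ k = smult ((-1)^k) (W ^ k)"
        proof -
          have "- W = smult (-1) W" by simp
          then show ?thesis by (simp only: smult_power)
        qed
        show "of_nat (n choose k) * (- W) ^ k * [:w0:] ^ (n - k) =
          smult (of_nat (n choose k) * (-1)^k * w0 ^ (n - k)) (W ^ k)"
          unfolding 1 const_pow of_nat_poly by (simp add: mult.commute)
      qed
      finally show ?thesis unfolding G_def by (simp add: sum_distrib_right)
    qed
    then have "poly ((pderiv ^^ (n - 1)) G) y0 =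
       (\<Sum>k\<le>n. of_nat (n choose k) * (-1)^k * w0 ^ (n - k) * poly ((pderiv ^^ (n - 1)) (W ^ k * pderiv V)) y0)"
      by (simp add: higher_pderiv_sum higher_pderiv_smult poly_sum)
    also have "\<dots> = fact n * poly (\<Sum>k\<le>n. tay (n - k) (UU V W k) * W ^ (n - k)) y0"
      unfolding poly_sum sum_distrib_left
    proof (intro sum.cong refl)
      fix k assume k: "k \<in> {..n}"
      then have kn: "k \<le> n" by simp
      show "of_nat (n choose k) * (-1)^k * w0 ^ (n - k) * poly ((pderiv ^^ (n - 1)) (W ^ k * pderiv V)) y0 =
         fact n * poly (tay (n - k) (UU V W k) * W ^ (n - k)) y0"
        unfolding tay_UU[OF kn assms] binomial_fact[OF kn] poly_mult poly_smult poly_power w0_def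
        by (simp only: times_divide_eq_left times_divide_eq_right mult_ac)
    qed
    finally show ?thesis using zero by simp
  qed
  then show ?thesis using poly_all_0_iff_0 by blast
qed

definition evB :: "complex poly \<Rightarrow> bpoly poly \<Rightarrow> bpoly poly" where
  "evB u w = poly (map_poly (\<lambda>c. [:const2 c:]) u) w"

lemma evB_pCons: "evB (pCons a u) w = [:const2 a:] + w * evB u w"
  unfolding evB_def by (simp add: map_poly_pCons)

lemma evB_0[simp]: "evB 0 w = 0" by (simp add: evB_def)

lemma poly_evB: "poly (evB u w) z = ev u (poly w z)"
  by (induction u) (simp_all add: evB_pCons ev_pCons)

lemma coeff0_evB: "coeff (evB u w) 0 = ev u (coeff w 0)"
  using poly_evB[of u w 0] by (simp add: poly_0_coeff_0)

lemma evB_diff_dvd: "w1 - w2 dvd evB u w1 - evB u w2"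
proof (induction u)
  case 0 then show ?case by (simp add: evB_def)
next
  case (pCons a u)
  have "evB (pCons a u) w1 - evB (pCons a u) w2 = (w1 - w2) * evB u w1 + w2 * (evB u w1 - evB u w2)"
    by (simp add: evB_pCons algebra_simps)
  then show ?case using pCons.IH by simp
qed

lemma power_diff_dvd: "(x::'a::comm_ring_1) - y dvd x ^ n - y ^ n"
proof (induction n)
  case 0 then show ?case by simp
next
  case (Suc n)
  have "x ^ Suc n - y ^ Suc n = x * (x ^ n - y ^ n) + (x - y) * y ^ n" by (simp add: algebra_simps)
  then show ?case using Suc.IH by simp
qed

lemma coeff_evB_taylor:
  "coeff (evB u (pCons y0 [:h:])) m = ev (tay m u) y0 * h ^ m"
proof (induction u arbitrary: m)
  case 0 then show ?case by (simp add: evB_def tay_def)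
next
  case (pCons a u)
  show ?case
  proof (cases m)
    case 0
    then show ?thesis by (simp add: coeff0_evB tay_0)
  next
    case (Suc m')
    have "coeff (evB (pCons a u) (pCons y0 [:h:])) m
       = y0 * coeff (evB u (pCons y0 [:h:])) m + h * coeff (evB u (pCons y0 [:h:])) m'"
      using Suc by (simp add: evB_pCons)
    also have "\<dots> = y0 * (ev (tay m u) y0 * h ^ m) + h * (ev (tay m' u) y0 * h ^ m')"
      by (simp add: pCons.IH)
    also have "\<dots> = ev (tay m (pCons a u)) y0 * h ^ m"
      using Suc by (simp add: tay_pCons_Suc ev_add ev_mult ev_pCons algebra_simps)
    finally show ?thesis .
  qed
qed

lemma coeff_dvd_monom_0:
  assumes "monom 1 (Suc c) dvd q" "m \<le> c"
  shows "coeff q m = 0"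
proof -
  obtain r where "q = monom 1 (Suc c) * r" using assms(1) by blast
  then show ?thesis using assms(2) by (simp add: coeff_monom_mult)
qed

section \<open>The key cancellation\<close>

locale cancel =
  fixes V :: "complex poly" and b c :: nat and x0 y0 :: bpoly and P0 Ex :: "complex poly"
  assumes c1: "1 \<le> c"
begin

definition "W = V ^ b"
definition "U k = UU V W k"
definition "V0 = ev V y0"
definition "Yt = [:y0:] + monom 1 1 * ([:V0:] - monom x0 c) ^ b"
definition "Z = monom x0 c - [:V0:] + (\<Sum>k<c. monom 1 k * evB (U k) Yt)
   + monom 1 c * evB P0 Yt + monom 1 (Suc c) * evB Ex Yt"

definition "Yt0 = pCons y0 [:ev W y0:]"

lemma Yt_dvd: "monom 1 (Suc c) dvd Yt - Yt0"
proof -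
  have e: "Yt - Yt0 = monom 1 1 * (([:V0:] - monom x0 c) ^ b - [:V0:] ^ b)"
    by (simp add: Yt_def Yt0_def W_def ev_power V0_def const_pow monom_altdef algebra_simps)
  have "([:V0:] - monom x0 c) - [:V0:] dvd ([:V0:] - monom x0 c) ^ b - [:V0:] ^ b"
    by (rule power_diff_dvd)
  moreover have "([:V0:] - monom x0 c) - [:V0:] = monom 1 c * [:- x0:]"
    by (simp add: monom_altdef)
  ultimately have "monom 1 c dvd ([:V0:] - monom x0 c) ^ b - [:V0:] ^ b"
    using dvd_mult_left by metis
  then have "monom 1 1 * monom 1 c dvd Yt - Yt0" unfolding e by (rule mult_dvd_mono[OF dvd_refl])
  then show ?thesis by (simp add: mult_monom)
qed

lemma coeff_evB_Yt:
  assumes "m \<le> c"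
  shows "coeff (evB u Yt) m = ev (tay m u * W ^ m) y0"
proof -
  have "Yt - Yt0 dvd evB u Yt - evB u Yt0" by (rule evB_diff_dvd)
  then have "monom 1 (Suc c) dvd evB u Yt - evB u Yt0" using Yt_dvd dvd_trans by blast
  then have "coeff (evB u Yt - evB u Yt0) m = 0" using assms by (rule coeff_dvd_monom_0)
  then have "coeff (evB u Yt) m = coeff (evB u Yt0) m" by simp
  also have "\<dots> = ev (tay m u * W ^ m) y0"
    unfolding Yt0_def coeff_evB_taylor by (simp add: ev_mult ev_power)
  finally show ?thesis .
qed

lemma coeff_Yt0: "coeff Yt 0 = y0"
  by (simp add: Yt_def coeff_monom_mult)

lemma coeff_Z:
  assumes "n \<le> c"
  shows "coeff Z n = (if n = c then x0 + ev P0 y0 - ev (U c) y0 else 0)"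
proof -
  have s: "coeff (\<Sum>k<c. monom 1 k * evB (U k) Yt) n = ev (\<Sum>k\<in>{k. k < c \<and> k \<le> n}. tay (n - k) (U k) * W ^ (n - k)) y0"
  proof -
    have "coeff (\<Sum>k<c. monom 1 k * evB (U k) Yt) n = (\<Sum>k<c. if n < k then 0 else ev (tay (n - k) (U k) * W ^ (n - k)) y0)"
      unfolding coeff_sum coeff_monom_mult using assms by (intro sum.cong refl) (simp add: coeff_evB_Yt)
    also have "\<dots> = (\<Sum>k\<in>{k. k < c \<and> k \<le> n}. ev (tay (n - k) (U k) * W ^ (n - k)) y0)"
      by (rule sum.mono_neutral_cong_right) auto
    finally show ?thesis by (simp add: ev_sum)
  qed
  have c0: "coeff (monom 1 c * evB P0 Yt) n = (if n = c then ev P0 y0 else 0)"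
    using assms by (simp add: coeff_monom_mult coeff0_evB coeff_Yt0)
  have c1': "coeff (monom 1 (Suc c) * evB Ex Yt) n = 0"
    using assms by (simp add: coeff_monom_mult)
  have U0: "U 0 = V" by (simp add: U_def UU_def)
  show ?thesis
  proof (cases "n = 0")
    case True
    have "{k. k < c \<and> k \<le> n} = {0}" using True c1 by auto
    then have "(\<Sum>k\<in>{k. k < c \<and> k \<le> n}. tay (n - k) (U k) * W ^ (n - k)) = V"
      using True by (simp add: U0 tay_0)
    then have "coeff (\<Sum>k<c. monom 1 k * evB (U k) Yt) n = V0" using s by (simp add: V0_def)
    then show ?thesis unfolding Z_def using True c1 c0 c1' by simp
  next
    case False
    have id: "(\<Sum>k\<le>n. tay (n - k) (U k) * W ^ (n - k)) = 0"
      unfolding U_def using False by (intro UU_identity) simp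
    show ?thesis
    proof (cases "n = c")
      case True
      have "{k. k < c \<and> k \<le> n} = {..n} - {c}" using True by auto
      then have "(\<Sum>k\<in>{k. k < c \<and> k \<le> n}. tay (n - k) (U k) * W ^ (n - k)) = 0 - U c"
        using id True by (simp add: sum_diff1 tay_0)
      then have "coeff (\<Sum>k<c. monom 1 k * evB (U k) Yt) n = - ev (U c) y0" using s by (simp add: ev_uminus)
      then show ?thesis unfolding Z_def using True False c0 c1' by (simp add: coeff_pCons split: nat.split)
    next
      case nc: False
      have "{k. k < c \<and> k \<le> n} = {..n}" using nc assms by auto
      then have "coeff (\<Sum>k<c. monom 1 k * evB (U k) Yt) n = 0" using s id by simp
      then show ?thesis unfolding Z_def using nc False c0 c1' assms by (simp add: coeff_pCons split: nat.split)
    qed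
  qed
qed

definition "Y1 = poly_shift c Z"

lemma Z_Y1: "Z = monom 1 c * Y1"
proof (rule poly_eqI)
  fix n
  show "coeff Z n = coeff (monom 1 c * Y1) n"
  proof (cases "n < c")
    case True then show ?thesis using coeff_Z[of n] by (simp add: coeff_monom_mult)
  next
    case False then show ?thesis by (simp add: coeff_monom_mult Y1_def coeff_poly_shift)
  qed
qed

lemma coeff_Y1_0: "coeff Y1 0 = x0 + ev P0 y0 - ev (U c) y0"
  using coeff_Z[of c] by (simp add: Y1_def coeff_poly_shift)

end

lemma complex_root_ex:
  assumes "1 \<le> m" shows "\<exists>z::complex. z ^ m = w"
proof -
  let ?p = "monom 1 m - [:w:]"
  have "coeff ?p m = 1" using assms by (cases m) simp_all
  then have "m \<le> degree ?p" by (intro le_degree) simp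
  then have "\<not> constant (poly ?p)" using assms constant_degree[of ?p] by simp
  then obtain z where "poly ?p z = 0" using fundamental_theorem_of_algebra by blast
  then show ?thesis by (auto simp: poly_monom)
qed

lemma coeff_pow_high:
  assumes "degree (V::complex poly) \<le> a" "a * i < q"
  shows "coeff (V ^ i) q = 0"
proof -
  have "degree (V ^ i) \<le> degree V * i" by (rule degree_power_le)
  also have "\<dots> \<le> a * i" using assms(1) by simp
  finally show ?thesis using assms(2) by (intro coeff_eq_0) simp
qed

lemma coeff_pow_top:
  assumes "degree (V::complex poly) \<le> a"
  shows "coeff (V ^ i) (a * i) = coeff V a ^ i"
proof (cases "coeff V a = 0")
  case False
  then have "a \<le> degree V" by (intro le_degree)
  then have d: "degree V = a" using assms by simp
  have "V \<noteq> 0" using False by auto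
  then have "degree (V ^ i) = a * i" using d by (simp add: degree_power_eq mult.commute)
  moreover have "lead_coeff (V ^ i) = lead_coeff V ^ i" by (rule lead_coeff_power)
  ultimately show ?thesis using d by simp
next
  case True
  show ?thesis
  proof (cases i)
    case 0 then show ?thesis by simp
  next
    case (Suc i')
    show ?thesis
    proof (cases "V = 0")
      case True then show ?thesis using Suc by simp
    next
      case False
      then have lt: "degree V < a"
        using True assms by (metis le_neq_implies_less leading_coeff_0_iff)
      have "degree (V ^ i) \<le> degree V * i" by (rule degree_power_le)
      also have "\<dots> < a * i" using lt Suc
        by (simp add: add_less_le_mono mult_le_mono1 less_imp_le)
      finally show ?thesis using True Suc by (simp add: coeff_eq_0)
    qed
  qed
qed

lemma perturb:
  fixes V :: "complex poly"
  assumes dV: "degree V \<le> a" and k: "Suc k \<le> a" and r: "r \<le> Suc k" and m: "1 \<le> m"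
  shows "coeff ((V + monom l (a - Suc k)) ^ m) (a * m - r) =
     coeff (V ^ m) (a * m - r) + (if r = Suc k then of_nat m * coeff V a ^ (m - 1) * l else 0)"
proof -
  define s where "s = a - Suc k"
  define p where "p = a * m - r"
  have trm: "coeff (of_nat (m choose i) * V ^ i * monom l s ^ (m - i)) p =
     (if i = m then coeff (V ^ m) p else if i = m - 1 \<and> r = Suc k then of_nat m * coeff V a ^ (m - 1) * l else 0)"
    if i: "i \<le> m" for i
  proof -
    have e: "of_nat (m choose i) * V ^ i * monom l s ^ (m - i) = smult (of_nat (m choose i)) (monom (l ^ (m - i)) (s * (m - i)) * V ^ i)"
      by (simp add: of_nat_poly monom_power mult.commute)
    have c: "coeff (of_nat (m choose i) * V ^ i * monom l s ^ (m - i)) p =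
       of_nat (m choose i) * (if p < s * (m - i) then 0 else l ^ (m - i) * coeff (V ^ i) (p - s * (m - i)))"
      unfolding e by (simp add: coeff_monom_mult)
    consider "i = m" | "i = m - 1" "1 \<le> m" | "i + 2 \<le> m" using i by linarith
    then show ?thesis
    proof cases
      case 1 then show ?thesis using c by simp
    next
      case 2
      then have mi: "m - i = 1" by simp
      have "m \<noteq> m - 1" using m by simp
      show ?thesis
      proof (cases "r = Suc k")
        case True
        have am: "a \<le> a * m" using m by simp
        have ps: "p - s = a * (m - 1)" unfolding p_def s_def diff_mult_distrib2 using True k am by simp
        have nps: "\<not> p < s" unfolding p_def s_def using True k am by linarith
        show ?thesis
        proof -
          have "m choose (m - 1) = m" using binomial_symmetric[of 1 m] m by (simp add: choose_one)
          then show ?thesis using c 2 mi True ps nps coeff_pow_top[OF dV, of "m - 1"] \<open>m \<noteq> m - 1\<close>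
            by (simp add: mult_ac)
        qed
      next
        case False
        have "a * (m - 1) < p - s \<or> p < s"
        proof -
          have "r \<le> k" using False r by simp
          then show ?thesis unfolding p_def s_def using k m
            by (cases m) (auto simp: algebra_simps)
        qed
        then show ?thesis using c 2 mi False coeff_pow_high[OF dV, of "m - 1" "p - s"] \<open>m \<noteq> m - 1\<close>
          by auto
      qed
    next
      case 3
      have "i \<noteq> m" "i \<noteq> m - 1" using 3 by auto
      have "a * i < p - s * (m - i) \<or> p < s * (m - i)"
      proof (cases "p < s * (m - i)")
        case False
        define X where "X = s * (m - i)"
        define Y where "Y = Suc k * (m - i)"
        define Ai where "Ai = a * i"
        have 1: "a * m = Ai + X + Y"
        proof -
          have "a * m = a * i + a * (m - i)" using 3 by (simp add: add_mult_distrib2[symmetric])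
          moreover have "a * (m - i) = s * (m - i) + Suc k * (m - i)"
          proof -
            have "a = s + Suc k" unfolding s_def using k by simp
            then show ?thesis by (metis add_mult_distrib)
          qed
          ultimately show ?thesis unfolding X_def Y_def Ai_def by simp
        qed
        have "Suc k * 2 \<le> Y" unfolding Y_def using 3 by (intro mult_le_mono2) simp
        then have 2: "2 * k + 2 \<le> Y" by simp
        have F: "\<not> p < X" using False unfolding X_def .
        have "Ai < p - X" using 1 2 r F unfolding p_def by (simp only: 1)
        then show ?thesis unfolding X_def Ai_def by simp
      qed simp
      then show ?thesis using c \<open>i \<noteq> m\<close> \<open>i \<noteq> m - 1\<close> coeff_pow_high[OF dV, of i "p - s * (m - i)"] by auto
    qed
  qed
  have "coeff ((V + monom l s) ^ m) p = (\<Sum>i\<le>m. coeff (of_nat (m choose i) * V ^ i * monom l s ^ (m - i)) p)"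
    by (simp add: binomial_ring coeff_sum)
  also have "\<dots> = (\<Sum>i\<le>m. (if i = m then coeff (V ^ m) p else if i = m - 1 \<and> r = Suc k then of_nat m * coeff V a ^ (m - 1) * l else 0))"
    by (intro sum.cong refl) (simp add: trm)
  also have "\<dots> = coeff (V ^ m) p + (if r = Suc k then of_nat m * coeff V a ^ (m - 1) * l else 0)"
  proof -
    have fin: "finite {..m}" by simp
    have "m \<in> {..m}" "m - 1 \<in> {..m}" by auto
    have "m - 1 \<noteq> m" using m by simp
    let ?A = "coeff (V ^ m) p" and ?B = "(if r = Suc k then of_nat m * coeff V a ^ (m - 1) * l else 0)"
    have "(\<Sum>i\<le>m. (if i = m then ?A else if i = m - 1 \<and> r = Suc k then of_nat m * coeff V a ^ (m - 1) * l else 0))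
       = (\<Sum>i\<le>m. (if i = m then ?A else 0) + (if i = m - 1 then ?B else 0))"
      using \<open>m - 1 \<noteq> m\<close> by (intro sum.cong refl) auto
    also have "\<dots> = ?A + ?B" by (simp add: sum.distrib)
    finally show ?thesis .
  qed
  finally show ?thesis unfolding s_def p_def .
qed

lemma root_poly:
  assumes m: "1 \<le> m" and w0: "w 0 \<noteq> 0"
  shows "\<exists>V::complex poly. degree V = a \<and> (\<forall>r\<le>a. coeff (V ^ m) (a * m - r) = w r)"
proof -
  obtain v0 where v0: "v0 ^ m = w 0" using complex_root_ex[OF m] by blast
  have v0nz: "v0 \<noteq> 0" using v0 w0 m by (cases m) auto
  have "\<exists>V::complex poly. degree V \<le> a \<and> coeff V a = v0 \<and> (\<forall>r\<le>k. coeff (V ^ m) (a * m - r) = w r)"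
    if "k \<le> a" for k
    using that
  proof (induction k)
    case 0
    have "degree (monom v0 a) \<le> a" by (simp add: degree_monom_le)
    then show ?case using coeff_pow_top[of "monom v0 a" a m] v0
      by (intro exI[of _ "monom v0 a"]) auto
  next
    case (Suc k)
    then obtain V where V: "degree V \<le> a" "coeff V a = v0" "\<forall>r\<le>k. coeff (V ^ m) (a * m - r) = w r"
      by auto
    define l where "l = (w (Suc k) - coeff (V ^ m) (a * m - Suc k)) / (of_nat m * v0 ^ (m - 1))"
    define V' where "V' = V + monom l (a - Suc k)"
    have nz: "of_nat m * v0 ^ (m - 1) \<noteq> 0" using m v0nz by simp
    have "degree V' \<le> a" unfolding V'_def using V(1)
      by (intro degree_add_le) (auto intro: order.trans[OF degree_monom_le])
    moreover have "coeff V' a = v0" unfolding V'_def using V(2) Suc.prems by simp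
    moreover have "\<forall>r\<le>Suc k. coeff (V' ^ m) (a * m - r) = w r"
    proof (intro allI impI)
      fix r assume r: "r \<le> Suc k"
      have "coeff (V' ^ m) (a * m - r) = coeff (V ^ m) (a * m - r) + (if r = Suc k then of_nat m * v0 ^ (m - 1) * l else 0)"
        unfolding V'_def using perturb[OF V(1) Suc.prems r m, of l] V(2) by simp
      then show "coeff (V' ^ m) (a * m - r) = w r"
        using V(3) r nz unfolding l_def by (cases "r = Suc k") auto
    qed
    ultimately show ?case by blast
  qed
  then obtain V :: "complex poly" where V: "degree V \<le> a" "coeff V a = v0" "\<forall>r\<le>a. coeff (V ^ m) (a * m - r) = w r"
    by blast
  have "a \<le> degree V" using V(2) v0nz by (intro le_degree) simp
  then have "degree V = a" using V(1) by simp
  then show ?thesis using V(3) by blast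
qed

lemma degree_UU:
  assumes "degree V = a" "1 \<le> a * b"
  shows "degree (UU V (V ^ b) k) \<le> a + k * (a * b - 1)"
proof (cases "k = 0")
  case True then show ?thesis using assms by (simp add: UU_def)
next
  case False
  let ?g = "(V ^ b) ^ k * pderiv V"
  have "degree ?g \<le> degree ((V ^ b) ^ k) + degree (pderiv V)" by (rule degree_mult_le)
  also have "\<dots> \<le> a * b * k + (a - 1)"
  proof (intro add_mono)
    have "degree ((V ^ b) ^ k) \<le> degree (V ^ b) * k" by (rule degree_power_le)
    also have "\<dots> \<le> (degree V * b) * k" by (intro mult_le_mono1 degree_power_le)
    finally show "degree ((V ^ b) ^ k) \<le> a * b * k" using assms by simp
    show "degree (pderiv V) \<le> a - 1" using assms by (simp add: degree_pderiv)
  qed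
  finally have g: "degree ?g \<le> a * b * k + (a - 1)" .
  have "degree (UU V (V ^ b) k) \<le> degree ((pderiv ^^ (k - 1)) ?g)"
    using False by (simp add: UU_def degree_smult_le)
  also have "\<dots> = degree ?g - (k - 1)" by (rule degree_higher_pderiv)
  also have "\<dots> \<le> a * b * k + (a - 1) - (k - 1)" using g by simp
  also have "\<dots> \<le> a + k * (a * b - 1)"
  proof -
    have "k \<le> a * b * k" using assms by simp
    moreover have "k * (a * b - 1) = a * b * k - k" by (simp add: diff_mult_distrib2 mult.commute)
    ultimately show ?thesis using False by simp
  qed
  finally show ?thesis .
qed

lemma coeff_UU_top:
  assumes "1 \<le> c"
  shows "coeff (UU V (V ^ b) c) j =
    (-1)^c / (fact c * of_nat (b * c + 1)) * pochhammer (of_nat (Suc j)) c * coeff (V ^ (b * c + 1)) (j + c)"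
proof -
  have nz: "(of_nat (Suc (b * c)) :: complex) \<noteq> 0" by (simp del: of_nat_Suc)
  have "pderiv (V ^ Suc (b * c)) = smult (of_nat (Suc (b * c))) (V ^ (b * c)) * pderiv V"
    by (rule pderiv_power_Suc)
  then have g: "(V ^ b) ^ c * pderiv V = smult (1 / of_nat (Suc (b * c))) (pderiv (V ^ Suc (b * c)))"
    using nz by (simp add: power_mult)
  have h: "(pderiv ^^ (c - 1)) (pderiv f) = (pderiv ^^ c) f" for f :: "complex poly"
    using assms by (metis Suc_diff_1 comp_apply funpow_Suc_right less_le_trans zero_less_one)
  have "UU V (V ^ b) c = smult ((-1)^c / fact c) ((pderiv ^^ (c - 1)) ((V ^ b) ^ c * pderiv V))"
    using assms by (simp add: UU_def)
  also have "\<dots> = smult ((-1)^c / fact c) (smult (1 / of_nat (Suc (b * c))) ((pderiv ^^ c) (V ^ Suc (b * c))))"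
    by (simp only: g higher_pderiv_smult h)
  finally have "coeff (UU V (V ^ b) c) j = (-1)^c / fact c * (1 / of_nat (Suc (b * c))) *
      (pochhammer (of_nat (Suc j)) c * coeff (V ^ Suc (b * c)) (j + c))"
    by (simp only: coeff_smult coeff_higher_pderiv mult.assoc)
  then show ?thesis by (simp del: of_nat_Suc)
qed

lemma lin_coeff: "coeff (coeff (lin a b c) 0) 1 = a"
  by (simp add: lin_def)

definition sigma :: aut where "sigma = (lin 0 1 0, lin 1 0 0)"

lemma sigma_affine: "sigma \<in> affine_aut"
  unfolding sigma_def affine_aut_def by force

lemma sigma_not_triang: "sigma \<notin> triangular_aut"
proof
  assume "sigma \<in> triangular_aut"
  then obtain \<alpha> P \<beta> \<gamma> where "sigma = triang_P \<alpha> P \<beta> \<gamma>" unfolding triangular_aut_def by auto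
  then have "snd sigma = snd (triang_P \<alpha> P \<beta> \<gamma>)" by simp
  then have "lin 1 0 0 = lin 0 \<beta> \<gamma>" unfolding sigma_def triang_snd by simp
  then show False using lin_coeff[of 1 0 0] lin_coeff[of 0 \<beta> \<gamma>] by simp
qed

lemma comp_sigma: "comp_aut sigma (f, g) = (g, f)"
  unfolding sigma_def by (simp add: comp_aut_lin)

lemma chain_eval:
  "comp_list [A, triang_P 1 Pe 1 0, sigma, triang_P 1 Qm 1 0, sigma, triang_P 1 Sin 1 0, (x0, y0)]
   = comp_aut A (x0 + ev Sin y0 + ev Pe (y0 + ev Qm (x0 + ev Sin y0)), y0 + ev Qm (x0 + ev Sin y0))"
  by (simp add: comp_list_def comp_aut_id comp_aut_triang comp_sigma)

lemma poly_pair_lin: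
  "(poly ([:const2 c1:] + [:const2 a1:] * Y + [:const2 b1:] * Z) (const2 e)) =
    const2 c1 + const2 a1 * poly Y (const2 e) + const2 b1 * poly Z (const2 e)"
  by simp

lemma delta_alg:
  fixes e :: complex and x v :: bpoly
  assumes "e \<noteq> 0"
  shows "const2 ((-1)^b * e^(c*b+1)) * (x + const2 (-1/e^c) * v)^b = const2 e * (v - const2 e ^ c * x)^b"
proof -
  have 1: "(-1)^b * e^(c*b+1) = e * (-(e^c))^b"
  proof -
    have "e * (-(e^c))^b = e * ((-1)^b * e^(c*b))" by (simp only: power_minus[of "e^c"] power_mult)
    then show ?thesis by (simp only: power_add power_one_right mult_ac)
  qed
  have 2: "const2 (-(e^c)) * (x + const2 (-1/e^c) * v) = v - const2 e ^ c * x"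
  proof -
    have "const2 (-(e^c)) * (x + const2 (-1/e^c) * v) = const2 (-(e^c)) * x + const2 ((-(e^c)) * (-1/e^c)) * v"
      by (simp only: distrib_left const2_mult mult.assoc)
    also have "(-(e^c)) * (-1/e^c) = 1" using assms by simp
    finally show ?thesis by (simp add: const2_uminus const2_power)
  qed
  have "const2 ((-1)^b * e^(c*b+1)) * (x + const2 (-1/e^c) * v)^b
      = const2 e * (const2 (-(e^c)) * (x + const2 (-1/e^c) * v))^b"
    unfolding 1 const2_mult const2_power power_mult_distrib by (simp add: mult_ac)
  also have "\<dots> = const2 e * (v - const2 e ^ c * x)^b" unfolding 2 ..
  finally show ?thesis .
qed

lemma X_alg:
  fixes e :: complex and x0 V0 B D :: bpoly and A :: "nat \<Rightarrow> bpoly"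
  assumes "e \<noteq> 0"
  shows "const2 (e^c) * (x0 + const2 (-1/e^c) * V0 + ((\<Sum>k<c. const2 (e^k/e^c) * A k) + B + const2 e * D))
    = x0 * const2 e ^ c - V0 + (\<Sum>k<c. const2 e ^ k * A k) + const2 e ^ c * B + const2 e ^ Suc c * D"
proof -
  have 1: "const2 (e^c) * const2 (-1/e^c) = -1" using assms by (simp flip: const2_mult add: const2_uminus)
  have 2: "const2 (e^c) * const2 (e^k/e^c) = const2 e ^ k" for k
  proof -
    have "e^c * (e^k/e^c) = e^k" using assms by simp
    then show ?thesis by (metis const2_mult const2_power)
  qed
  have 3: "const2 (e^c) * (\<Sum>k<c. const2 (e^k/e^c) * A k) = (\<Sum>k<c. const2 e ^ k * A k)"
    unfolding sum_distrib_left by (intro sum.cong refl) (simp add: mult.assoc[symmetric] 2)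
  have 4: "const2 (e^c) * (const2 e * D) = const2 e ^ Suc c * D"
    by (simp add: const2_power mult_ac)
  have "const2 (e^c) * (x0 + const2 (-1/e^c) * V0 + ((\<Sum>k<c. const2 (e^k/e^c) * A k) + B + const2 e * D))
     = const2 (e^c) * x0 + (const2 (e^c) * const2 (-1/e^c)) * V0 + const2 (e^c) * (\<Sum>k<c. const2 (e^k/e^c) * A k)
       + const2 (e^c) * B + const2 (e^c) * (const2 e * D)"
    by (simp only: distrib_left mult.assoc add.assoc)
  also have "\<dots> = x0 * const2 e ^ c - V0 + (\<Sum>k<c. const2 e ^ k * A k) + const2 e ^ c * B + const2 e ^ Suc c * D"
    unfolding 1 3 4 by (simp add: const2_power mult.commute)
  finally show ?thesis .
qed

lemma triang_in: "\<alpha> \<noteq> 0 \<Longrightarrow> \<beta> \<noteq> 0 \<Longrightarrow> degree P = n \<Longrightarrow> triang_P \<alpha> P \<beta> \<gamma> \<in> triangular_deg n"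
  unfolding triangular_deg_def by blast

lemma lim_alg:
  fixes x y p :: bpoly
  assumes "\<alpha> \<noteq> 0"
  shows "const2 (c + b*\<gamma>) + const2 (a*\<alpha>) * (x + const2 (1/\<alpha>) * p) + const2 (b*\<beta>) * y
     = const2 c + const2 a * (const2 \<alpha> * x + p) + const2 b * (const2 \<gamma> + const2 \<beta> * y)"
proof -
  have "const2 (a*\<alpha>) * const2 (1/\<alpha>) = const2 a" using assms by (simp flip: const2_mult)
  then have "const2 (a*\<alpha>) * (x + const2 (1/\<alpha>) * p) = const2 a * const2 \<alpha> * x + const2 a * p"
    by (simp add: distrib_left const2_mult mult.assoc[symmetric])
  then show ?thesis by (simp add: const2_add const2_mult distrib_left add_ac mult_ac)
qed

theorem mainTheorem1:
  fixes a b c d :: nat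
  assumes "a \<ge> 2" and "b \<ge> 2" and "c \<ge> 1" and "d = a * b - 1"
  shows "Gpd [c * d + a] \<subseteq> zclosure (Gpd [c * d - 1, b, a])"
proof
  fix \<psi> assume psi: "\<psi> \<in> Gpd [c * d + a]"
  have a2: "2 \<le> a" and b2: "2 \<le> b" and c1: "1 \<le> c" and dd: "d = a * b - 1" using assms by auto
  obtain A0 A1 \<alpha> P \<beta> \<gamma> where h: "A0 \<in> affine_aut" "A1 \<in> affine_aut" "\<alpha> \<noteq> 0" "\<beta> \<noteq> 0"
    "degree P = c * d + a" "\<psi> = comp_aut A0 (comp_aut (triang_P \<alpha> P \<beta> \<gamma>) A1)"
    using Gpd1_elem[OF psi] by metis
  obtain a1 b1 c1' a2' b2' c2 where A0: "A0 = (lin a1 b1 c1', lin a2' b2' c2)" "a1 * b2' - a2' * b1 \<noteq> 0"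
    using h(1) unfolding affine_aut_def by blast
  define x0 where "x0 = fst A1"
  define y0 where "y0 = snd A1"
  have A1: "A1 = (x0, y0)" by (simp add: x0_def y0_def)
  define n where "n = c * d + a"
  define m where "m = b * c + 1"
  define T where "T = smult (1 / \<alpha>) P"
  have degT: "degree T = n" using h(3,5) by (simp add: T_def n_def)
  have ab: "a + 2 \<le> a * b"
  proof -
    have "a * 2 \<le> a * b" using b2 by (rule mult_le_mono2)
    then show ?thesis using a2 by linarith
  qed
  have cd: "c * d + c = c * (a * b)"
  proof -
    have "a * b = d + 1" using dd ab by simp
    then show ?thesis by (simp add: algebra_simps)
  qed
  have am: "a * m = n + c"
  proof -
    have "a * m = c * (a * b) + a" unfolding m_def by (simp add: algebra_simps)
    then show ?thesis unfolding n_def using cd by simp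
  qed
  define \<kappa> :: "nat \<Rightarrow> complex" where "\<kappa> j = (-1)^c / (fact c * of_nat m) * pochhammer (of_nat (Suc j)) c" for j :: nat
  have \<kappa>nz: "\<kappa> j \<noteq> 0" for j
  proof -
    have "pochhammer (of_nat (Suc j) :: complex) c \<noteq> 0"
    proof
      assume "pochhammer (of_nat (Suc j) :: complex) c = 0"
      then obtain k where "(of_nat (Suc j) :: complex) = - of_nat k" by (auto simp: pochhammer_eq_0_iff)
      then have "(of_nat (Suc j) :: complex) + of_nat k = 0" by (simp only: eq_neg_iff_add_eq_0)
      then have "(of_nat (Suc j + k) :: complex) = 0" by (simp only: of_nat_add)
      then show False by (simp only: of_nat_eq_0_iff)
    qed
    moreover have "(of_nat m :: complex) \<noteq> 0" unfolding m_def by (simp only: of_nat_eq_0_iff)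
    ultimately show ?thesis unfolding \<kappa>_def by simp
  qed
  define w where "w r = - coeff T (n - r) / \<kappa> (n - r)" for r
  have w0: "w 0 \<noteq> 0"
  proof -
    have "n > 0" unfolding n_def using a2 by simp
    then have "T \<noteq> 0" using degT by auto
    then have "coeff T n \<noteq> 0" using degT by (metis leading_coeff_0_iff)
    then show ?thesis unfolding w_def using \<kappa>nz[of n] by simp
  qed
  obtain V where V: "degree V = a" "\<forall>r\<le>a. coeff (V ^ m) (a * m - r) = w r"
    using root_poly[of m w a] w0 unfolding m_def by auto
  define U where "U k = UU V (V ^ b) k" for k
  define P0 where "P0 = T + U c"
  define Ex where "Ex = (monom 1 (c * d - 1) :: complex poly)"
  have d_ge: "a + 1 \<le> d" using ab dd by simp
  have ab1: "1 \<le> a * b" using ab by linarith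
  have degU: "degree (U k) \<le> c * d - 1" if "k < c" for k
  proof -
    have "degree (U k) \<le> a + k * d" unfolding U_def dd using degree_UU[OF V(1) ab1, of k] by simp
    also have "\<dots> \<le> a + (c - 1) * d" using that by (intro add_left_mono mult_le_mono1) linarith
    also have "\<dots> \<le> c * d - 1"
    proof -
      have "c * d = (c - 1) * d + d" using c1 by (metis add.commute mult_Suc Suc_diff_1 less_le_trans zero_less_one)
      then show ?thesis using d_ge by simp
    qed
    finally show ?thesis .
  qed
  have degUc: "degree (U c) \<le> n" unfolding U_def n_def using degree_UU[OF V(1) ab1, of c] dd
    by (simp add: mult.commute)
  have coeffUc: "coeff (U c) j = \<kappa> j * coeff (V ^ m) (j + c)" for j
    unfolding U_def \<kappa>_def m_def using coeff_UU_top[OF c1, of V b j] by simp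
  have degP0: "degree P0 \<le> c * d - 1"
  proof (rule degree_le, intro allI impI)
    fix j assume j: "c * d - 1 < j"
    show "coeff P0 j = 0"
    proof (cases "j \<le> n")
      case True
      define r where "r = n - j"
      have r: "r \<le> a" "n - r = j" "j + c = a * m - r" unfolding r_def using True j am unfolding n_def by auto
      have "coeff (U c) j = \<kappa> j * w r" using coeffUc[of j] V(2) r by simp
      also have "\<dots> = - coeff T j" unfolding w_def r(2) using \<kappa>nz[of j] by simp
      finally show ?thesis unfolding P0_def by simp
    next
      case False
      then show ?thesis unfolding P0_def using degT degUc by (simp add: coeff_eq_0)
    qed
  qed
  define \<pi> where "\<pi> = (\<Sum>k<c. monom (coeff (U k) (c * d - 1)) k) + monom (coeff P0 (c * d - 1)) c + monom 1 (Suc c)"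
  have \<pi>nz: "\<pi> \<noteq> 0"
  proof -
    have "coeff \<pi> (Suc c) = 1" unfolding \<pi>_def by (simp add: coeff_sum)
    then show ?thesis by auto
  qed
  define E where "E = {e. e \<noteq> 0 \<and> poly \<pi> e \<noteq> 0}"
  have infE: "infinite E"
  proof
    assume "finite E"
    moreover have "finite ({0} \<union> {x. poly \<pi> x = 0})" using poly_roots_finite[OF \<pi>nz] by simp
    ultimately have "finite (E \<union> ({0} \<union> {x. poly \<pi> x = 0}))" by simp
    moreover have "E \<union> ({0} \<union> {x. poly \<pi> x = 0}) = UNIV" unfolding E_def by auto
    ultimately show False using infinite_UNIV_char_0 by (metis (full_types))
  qed
  interpret C: cancel V b c x0 y0 P0 Ex using c1 by unfold_locales
  have CU: "C.U k = U k" for k by (simp add: C.U_def C.W_def U_def)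
  define Q1 where "Q1 = [:const2 (c1' + b1*\<gamma>):] + [:const2 (a1*\<alpha>):] * C.Y1 + [:const2 (b1*\<beta>):] * C.Yt"
  define Q2 where "Q2 = [:const2 (c2 + b2'*\<gamma>):] + [:const2 (a2'*\<alpha>):] * C.Y1 + [:const2 (b2'*\<beta>):] * C.Yt"
  define A0' where "A0' = (lin (a1*\<alpha>) (b1*\<beta>) (c1' + b1*\<gamma>), lin (a2'*\<alpha>) (b2'*\<beta>) (c2 + b2'*\<gamma>))"
  have A0'aff: "A0' \<in> affine_aut"
  proof -
    have "(a1*\<alpha>) * (b2'*\<beta>) - (a2'*\<alpha>) * (b1*\<beta>) = \<alpha> * \<beta> * (a1 * b2' - a2' * b1)"
      by (simp add: algebra_simps)
    then have "(a1*\<alpha>) * (b2'*\<beta>) - (a2'*\<alpha>) * (b1*\<beta>) \<noteq> 0" using h(3,4) A0(2) by simp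
    then show ?thesis unfolding A0'_def affine_aut_def by blast
  qed
  have lim: "(coeff Q1 0, coeff Q2 0) = \<psi>"
  proof -
    have Y10: "coeff C.Y1 0 = x0 + const2 (1/\<alpha>) * ev P y0"
      using C.coeff_Y1_0 by (simp add: CU P0_def T_def ev_add ev_smult)
    have Yt0: "coeff C.Yt 0 = y0" by (rule C.coeff_Yt0)
    have psi': "\<psi> = (const2 c1' + const2 a1 * (const2 \<alpha> * x0 + ev P y0) + const2 b1 * (const2 \<gamma> + const2 \<beta> * y0),
                    const2 c2 + const2 a2' * (const2 \<alpha> * x0 + ev P y0) + const2 b2' * (const2 \<gamma> + const2 \<beta> * y0))"
      unfolding h(6) A0(1) A1 by (simp add: comp_aut_triang comp_aut_lin)
    show ?thesis unfolding psi' Q1_def Q2_def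
      by (simp add: Y10 Yt0 lim_alg[OF h(3)])
  qed
  have fam: "(poly Q1 (const2 e), poly Q2 (const2 e)) \<in> Gpd [c * d - 1, b, a]" if e: "e \<in> E" for e
  proof -
    have e0: "e \<noteq> 0" and pe: "poly \<pi> e \<noteq> 0" using e unfolding E_def by auto
    define Pe where "Pe = (\<Sum>k<c. smult (e^k/e^c) (U k)) + P0 + smult e Ex"
    define Qm where "Qm = monom ((-1)^b * e^(c*b+1)) b"
    define Sin where "Sin = smult (-1/e^c) V"
    define u where "u = x0 + ev Sin y0"
    define \<delta> where "\<delta> = ev Qm u"
    define z where "z = const2 e"
    have Yeq: "y0 + \<delta> = poly C.Yt z"
    proof -
      have "ev Sin y0 = const2 (-1/e^c) * C.V0" by (simp only: Sin_def ev_smult C.V0_def)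
      then have "\<delta> = const2 ((-1)^b * e^(c*b+1)) * (x0 + const2 (-1/e^c) * C.V0)^b"
        unfolding \<delta>_def Qm_def u_def by (simp only: ev_monom)
      also have "\<dots> = const2 e * (C.V0 - const2 e ^ c * x0)^b" by (rule delta_alg[OF e0])
      finally show ?thesis unfolding z_def by (simp add: C.Yt_def poly_monom mult.commute)
    qed
    define Ye where "Ye = poly C.Yt z"
    have Xeq: "u + ev Pe (y0 + \<delta>) = poly C.Y1 z"
    proof -
      have pZ: "poly C.Z z = x0 * z ^ c - C.V0 + (\<Sum>k<c. z ^ k * ev (U k) Ye) + z ^ c * ev P0 Ye + z ^ Suc c * ev Ex Ye"
        unfolding C.Z_def Ye_def by (simp add: poly_sum poly_monom poly_evB CU)
      have pe: "u + ev Pe Ye = x0 + const2 (-1/e^c) * C.V0 + ((\<Sum>k<c. const2 (e^k/e^c) * ev (U k) Ye) + ev P0 Ye + const2 e * ev Ex Ye)"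
        unfolding u_def Pe_def Sin_def by (simp only: ev_add ev_sum ev_smult C.V0_def)
      have zc: "z ^ c = const2 (e ^ c)" by (simp add: z_def const2_power)
      have "z ^ c * (u + ev Pe Ye) = const2 (e ^ c) * (u + ev Pe Ye)" by (simp only: zc)
      also have "\<dots> = x0 * z ^ c - C.V0 + (\<Sum>k<c. z ^ k * ev (U k) Ye) + z ^ c * ev P0 Ye + z ^ Suc c * ev Ex Ye"
        unfolding pe unfolding z_def by (rule X_alg[OF e0])
      also have "\<dots> = poly C.Z z" using pZ by simp
      also have "\<dots> = z ^ c * poly C.Y1 z" by (simp add: C.Z_Y1 poly_monom)
      finally have "z ^ c * (u + ev Pe Ye) = z ^ c * poly C.Y1 z" .
      moreover have "z ^ c \<noteq> 0" unfolding z_def using e0 by simp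
      ultimately have "u + ev Pe Ye = poly C.Y1 z" using mult_left_cancel by blast
      then show ?thesis using Yeq unfolding Ye_def by simp
    qed
    have cPe: "coeff Pe j = (\<Sum>k<c. e^k/e^c * coeff (U k) j) + coeff P0 j + e * coeff Ex j" for j
      unfolding Pe_def by (simp add: coeff_sum)
    have degPe: "degree Pe = c * d - 1"
    proof (rule antisym)
      show "degree Pe \<le> c * d - 1"
      proof (rule degree_le, intro allI impI)
        fix j assume j: "c * d - 1 < j"
        have "coeff (U k) j = 0" if "k < c" for k using degU[OF that] j by (simp add: coeff_eq_0)
        moreover have "coeff P0 j = 0" using degP0 j by (simp add: coeff_eq_0)
        moreover have "coeff Ex j = 0" using j by (simp add: Ex_def)
        ultimately show "coeff Pe j = 0" unfolding cPe by simp
      qed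
      have "e ^ c * coeff Pe (c * d - 1) = poly \<pi> e"
      proof -
        have "e ^ c * coeff Pe (c * d - 1) = (\<Sum>k<c. e ^ c * (e^k/e^c * coeff (U k) (c * d - 1))) + e ^ c * coeff P0 (c * d - 1) + e ^ Suc c"
          unfolding cPe by (simp add: distrib_left sum_distrib_left Ex_def)
        also have "\<dots> = poly \<pi> e" unfolding \<pi>_def using e0
          by (simp add: poly_sum poly_monom mult_ac)
        finally show ?thesis .
      qed
      then have "coeff Pe (c * d - 1) \<noteq> 0" using pe by auto
      then show "c * d - 1 \<le> degree Pe" by (rule le_degree)
    qed
    have degQm: "degree Qm = b" unfolding Qm_def using e0 by (simp add: degree_monom_eq)
    have degSin: "degree Sin = a" unfolding Sin_def using e0 V(1) by simp
    define asL where "asL = [A0', sigma, sigma, A1]"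
    define tsL where "tsL = [triang_P 1 Pe 1 0, triang_P 1 Qm 1 0, triang_P 1 Sin 1 0]"
    have comp: "comp_list (interleave asL tsL) = (poly Q1 (const2 e), poly Q2 (const2 e))"
    proof -
      have "comp_list (interleave asL tsL) = comp_aut A0' (u + ev Pe (y0 + \<delta>), y0 + \<delta>)"
        unfolding asL_def tsL_def A1 u_def \<delta>_def by (simp add: chain_eval)
      also have "\<dots> = (poly Q1 (const2 e), poly Q2 (const2 e))"
        unfolding Xeq unfolding Yeq A0'_def Q1_def Q2_def z_def by (simp add: comp_aut_lin)
      finally show ?thesis .
    qed
    have c1: "\<forall>i<length asL. asL ! i \<in> affine_aut"
      unfolding asL_def using A0'aff sigma_affine h(2) by (auto simp: less_Suc_eq nth_Cons')
    have c2: "\<forall>i<length tsL. tsL ! i \<in> triangular_deg ([c * d - 1, b, a] ! i)"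
      unfolding tsL_def using degPe degQm degSin by (auto simp: less_Suc_eq nth_Cons' intro!: triang_in)
    have c3: "\<forall>i. 0 < i \<and> i < length [c * d - 1, b, a] \<longrightarrow> asL ! i \<notin> triangular_aut"
      unfolding asL_def using sigma_not_triang by (auto simp: less_Suc_eq nth_Cons')
    show ?thesis unfolding Gpd_def
      using comp c1 c2 c3 by (intro CollectI exI[of _ asL] exI[of _ tsL]) (simp add: asL_def tsL_def)
  qed
  have "(coeff Q1 0, coeff Q2 0) \<in> zclosure (Gpd [c * d - 1, b, a])"
    by (rule closure_lemma[OF infE fam]) (use lim Gpd1_GG[OF psi] in simp_all)
  then show "\<psi> \<in> zclosure (Gpd [c * d - 1, b, a])" using lim by simp
qed

end
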